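(* Let $U_0, c_0, \rho_0 > 0$ be constants. Let $f_1, f_2, f_3, f_4 : \mathbb{R} \to \mathbb{R}$ be continuously differentiable functions and let $k_i, l_i, m_i$ ($i = 1,\dots,4$) be real numbers with $k_3 k_4 \neq 0$. Write $r_i = \sqrt{k_i^2 + l_i^2 + m_i^2}$ and $\xi_i = k_i x + l_i y + m_i z$. Define $$v_x'(x,y,z,t) = k_1 f_1[\xi_1 - (k_1 U_0 - c_0 r_1)t] + k_2 f_2[\xi_2 - (k_2 U_0 + c_0 r_2)t] + \tfrac{l_3}{k_3} f_3[\xi_3 - k_3 U_0 t] + \tfrac{m_4}{k_4} f_4[\xi_4 - k_4 U_0 t],$$ $$v_y'(x,y,z,t) = l_1 f_1[\xi_1 - (k_1 U_0 - c_0 r_1)t] + l_2 f_2[\xi_2 - (k_2 U_0 + c_0 r_2)t] - f_3[\xi_3 - k_3 U_0 t],$$ $$v_z'(x,y,z,t) = m_1 f_1[\xi_1 - (k_1 U_0 - c_0 r_1)t] + m_2 f_2[\xi_2 - (k_2 U_0 + c_0 r_2)t] - f_4[\xi_4 - k_4 U_0 t],$$ $$p'(x,y,z,t) = -c_0\rho_0 r_1 f_1[\xi_1 - (k_1 U_0 - c_0 r_1)t] + c_0 \rho_0 r_2 f_2[\xi_2 - (k_2 U_0 + c_0 r_2)t].$$ Then $(v_x', v_y', v_z', p')$ satisfies pointwise on $\mathbb{R}^3 \times \mathbb{R}$ the system $$\partial_t v_x' + U_0 \partial_x v_x' + \tfrac{1}{\rho_0}\partial_x p' = 0,\quad \partial_t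 v_y' + U_0 \partial_x v_y' + \tfrac{1}{\rho_0}\partial_y p' = 0,\quad \partial_t v_z' + U_0 \partial_x v_z' + \tfrac{1}{\rho_0}\partial_z p' = 0,$$ $$\partial_t p' + U_0 \partial_x p' + \rho_0 c_0^2(\partial_x v_x' + \partial_y v_y' + \partial_z v_z') = 0,$$ and the initial conditions $v_x'(x,y,z,0) = k_1 f_1(\xi_1) + k_2 f_2(\xi_2) + \frac{l_3}{k_3} f_3(\xi_3) + \frac{m_4}{k_4} f_4(\xi_4)$, $v_y'(x,y,z,0) = l_1 f_1(\xi_1) + l_2 f_2(\xi_2) - f_3(\xi_3)$, $v_z'(x,y,z,0) = m_1 f_1(\xi_1) + m_2 f_2(\xi_2) - f_4(\xi_4)$, $p'(x,y,z,0) = -c_0\rho_0 r_1 f_1(\xi_1) + c_0\rho_0 r_2 f_2(\xi_2)$.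
   Context: This system is the 3D Euler equations linearized at the uniform flow with velocity $(U_0,0,0)$, density $\rho_0$, pressure $p_0$, sound speed $c_0$. *)

theory Defs
  imports "HOL-Analysis.Analysis"
begin

definition rr :: "(nat \<Rightarrow> real) \<Rightarrow> (nat \<Rightarrow> real) \<Rightarrow> (nat \<Rightarrow> real) \<Rightarrow> nat \<Rightarrow> real" where
  "rr k l m i = sqrt ((k i)\<^sup>2 + (l i)\<^sup>2 + (m i)\<^sup>2)"

definition xi :: "(nat \<Rightarrow> real) \<Rightarrow> (nat \<Rightarrow> real) \<Rightarrow> (nat \<Rightarrow> real) \<Rightarrow> nat \<Rightarrow> real \<Rightarrow> real \<Rightarrow> real \<Rightarrow> real" where
  "xi k l m i x y z = k i * x + l i * y + m i * z"

definition arg1 where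
  "arg1 U0 c0 k l m x y z t = xi k l m 1 x y z - (k 1 * U0 - c0 * rr k l m 1) * t"
definition arg2 where
  "arg2 U0 c0 k l m x y z t = xi k l m 2 x y z - (k 2 * U0 + c0 * rr k l m 2) * t"
definition arg3 where
  "arg3 U0 (k :: nat \<Rightarrow> real) l m x y z t = xi k l m 3 x y z - k 3 * U0 * t"
definition arg4 where
  "arg4 U0 (k :: nat \<Rightarrow> real) l m x y z t = xi k l m 4 x y z - k 4 * U0 * t"

definition vx :: "real \<Rightarrow> real \<Rightarrow> (nat \<Rightarrow> real \<Rightarrow> real) \<Rightarrow> (nat \<Rightarrow> real) \<Rightarrow> (nat \<Rightarrow> real) \<Rightarrow> (nat \<Rightarrow> real)
    \<Rightarrow> real \<Rightarrow> real \<Rightarrow> real \<Rightarrow> real \<Rightarrow> real" where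
  "vx U0 c0 f k l m x y z t =
     k 1 * f 1 (arg1 U0 c0 k l m x y z t) + k 2 * f 2 (arg2 U0 c0 k l m x y z t)
     + l 3 / k 3 * f 3 (arg3 U0 k l m x y z t) + m 4 / k 4 * f 4 (arg4 U0 k l m x y z t)"

definition vy :: "real \<Rightarrow> real \<Rightarrow> (nat \<Rightarrow> real \<Rightarrow> real) \<Rightarrow> (nat \<Rightarrow> real) \<Rightarrow> (nat \<Rightarrow> real) \<Rightarrow> (nat \<Rightarrow> real)
    \<Rightarrow> real \<Rightarrow> real \<Rightarrow> real \<Rightarrow> real \<Rightarrow> real" where
  "vy U0 c0 f k l m x y z t =
     l 1 * f 1 (arg1 U0 c0 k l m x y z t) + l 2 * f 2 (arg2 U0 c0 k l m x y z t)
     - f 3 (arg3 U0 k l m x y z t)"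

definition vz :: "real \<Rightarrow> real \<Rightarrow> (nat \<Rightarrow> real \<Rightarrow> real) \<Rightarrow> (nat \<Rightarrow> real) \<Rightarrow> (nat \<Rightarrow> real) \<Rightarrow> (nat \<Rightarrow> real)
    \<Rightarrow> real \<Rightarrow> real \<Rightarrow> real \<Rightarrow> real \<Rightarrow> real" where
  "vz U0 c0 f k l m x y z t =
     m 1 * f 1 (arg1 U0 c0 k l m x y z t) + m 2 * f 2 (arg2 U0 c0 k l m x y z t)
     - f 4 (arg4 U0 k l m x y z t)"

definition pp :: "real \<Rightarrow> real \<Rightarrow> real \<Rightarrow> (nat \<Rightarrow> real \<Rightarrow> real) \<Rightarrow> (nat \<Rightarrow> real) \<Rightarrow> (nat \<Rightarrow> real) \<Rightarrow> (nat \<Rightarrow> real)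
    \<Rightarrow> real \<Rightarrow> real \<Rightarrow> real \<Rightarrow> real \<Rightarrow> real" where
  "pp U0 c0 rho0 f k l m x y z t =
     - c0 * rho0 * rr k l m 1 * f 1 (arg1 U0 c0 k l m x y z t)
     + c0 * rho0 * rr k l m 2 * f 2 (arg2 U0 c0 k l m x y z t)"

end

theory Submission
  imports Defs
begin


definition G :: "(nat \<Rightarrow> real \<Rightarrow> real) \<Rightarrow> (nat \<Rightarrow> real) \<Rightarrow> (nat \<Rightarrow> real) \<Rightarrow> (nat \<Rightarrow> real)
   \<Rightarrow> (nat \<Rightarrow> real) \<Rightarrow> (nat \<Rightarrow> real) \<Rightarrow> real \<Rightarrow> real \<Rightarrow> real \<Rightarrow> real \<Rightarrow> real" where
  "G f k l m w c x y z t = (\<Sum>i\<in>{1,2,3,4::nat}. c i * f i (k i * x + l i * y + m i * z - w i * t))"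

lemma G_dt:
  assumes "\<And>i u. i \<in> {1,2,3,4} \<Longrightarrow> (f i has_real_derivative deriv (f i) u) (at u)"
  shows "deriv (\<lambda>s. G f k l m w c x y z s) t
     = (\<Sum>i\<in>{1,2,3,4::nat}. c i * deriv (f i) (k i * x + l i * y + m i * z - w i * t) * (- w i))"
  unfolding G_def
  apply (rule DERIV_imp_deriv)
  apply (rule DERIV_sum)
  subgoal for i
    apply (rule DERIV_cong[OF DERIV_cmult[OF DERIV_chain2[OF assms, where Db="- w i"]]])
      apply assumption
     apply (auto intro!: derivative_eq_intros)
    done
  done

lemma G_dx:
  assumes "\<And>i u. i \<in> {1,2,3,4} \<Longrightarrow> (f i has_real_derivative deriv (f i) u) (at u)"
  shows "deriv (\<lambda>s. G f k l m w c s y z t) x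
     = (\<Sum>i\<in>{1,2,3,4::nat}. c i * deriv (f i) (k i * x + l i * y + m i * z - w i * t) * k i)"
  unfolding G_def
  apply (rule DERIV_imp_deriv)
  apply (rule DERIV_sum)
  subgoal for i
    apply (rule DERIV_cong[OF DERIV_cmult[OF DERIV_chain2[OF assms, where Db="k i"]]])
      apply assumption
     apply (auto intro!: derivative_eq_intros)
    done
  done

lemma G_dy:
  assumes "\<And>i u. i \<in> {1,2,3,4} \<Longrightarrow> (f i has_real_derivative deriv (f i) u) (at u)"
  shows "deriv (\<lambda>s. G f k l m w c x s z t) y
     = (\<Sum>i\<in>{1,2,3,4::nat}. c i * deriv (f i) (k i * x + l i * y + m i * z - w i * t) * l i)"
  unfolding G_def
  apply (rule DERIV_imp_deriv)
  apply (rule DERIV_sum)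
  subgoal for i
    apply (rule DERIV_cong[OF DERIV_cmult[OF DERIV_chain2[OF assms, where Db="l i"]]])
      apply assumption
     apply (auto intro!: derivative_eq_intros)
    done
  done

lemma G_dz:
  assumes "\<And>i u. i \<in> {1,2,3,4} \<Longrightarrow> (f i has_real_derivative deriv (f i) u) (at u)"
  shows "deriv (\<lambda>s. G f k l m w c x y s t) z
     = (\<Sum>i\<in>{1,2,3,4::nat}. c i * deriv (f i) (k i * x + l i * y + m i * z - w i * t) * m i)"
  unfolding G_def
  apply (rule DERIV_imp_deriv)
  apply (rule DERIV_sum)
  subgoal for i
    apply (rule DERIV_cong[OF DERIV_cmult[OF DERIV_chain2[OF assms, where Db="m i"]]])
      apply assumption
     apply (auto intro!: derivative_eq_intros)
    done
  done

theorem proposition5: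
  fixes U0 c0 rho0 :: real and f :: "nat \<Rightarrow> real \<Rightarrow> real" and k l m :: "nat \<Rightarrow> real"
  assumes "U0 > 0" "c0 > 0" "rho0 > 0"
    and "\<And>i. i \<in> {1,2,3,4} \<Longrightarrow> f i C1_differentiable_on UNIV"
    and "k 3 * k 4 \<noteq> 0"
  defines "Vx \<equiv> vx U0 c0 f k l m" and "Vy \<equiv> vy U0 c0 f k l m" and "Vz \<equiv> vz U0 c0 f k l m"
    and "P \<equiv> pp U0 c0 rho0 f k l m"
  shows "(\<forall>x y z t.
      deriv (\<lambda>s. Vx x y z s) t + U0 * deriv (\<lambda>s. Vx s y z t) x + 1 / rho0 * deriv (\<lambda>s. P s y z t) x = 0
    \<and> deriv (\<lambda>s. Vy x y z s) t + U0 * deriv (\<lambda>s. Vy s y z t) x + 1 / rho0 * deriv (\<lambda>s. P x s z t) y = 0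
    \<and> deriv (\<lambda>s. Vz x y z s) t + U0 * deriv (\<lambda>s. Vz s y z t) x + 1 / rho0 * deriv (\<lambda>s. P x y s t) z = 0
    \<and> deriv (\<lambda>s. P x y z s) t + U0 * deriv (\<lambda>s. P s y z t) x
        + rho0 * c0\<^sup>2 * (deriv (\<lambda>s. Vx s y z t) x + deriv (\<lambda>s. Vy x s z t) y + deriv (\<lambda>s. Vz x y s t) z) = 0)
    \<and> (\<forall>x y z.
      Vx x y z 0 = k 1 * f 1 (xi k l m 1 x y z) + k 2 * f 2 (xi k l m 2 x y z)
          + l 3 / k 3 * f 3 (xi k l m 3 x y z) + m 4 / k 4 * f 4 (xi k l m 4 x y z)
    \<and> Vy x y z 0 = l 1 * f 1 (xi k l m 1 x y z) + l 2 * f 2 (xi k l m 2 x y z) - f 3 (xi k l m 3 x y z)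
    \<and> Vz x y z 0 = m 1 * f 1 (xi k l m 1 x y z) + m 2 * f 2 (xi k l m 2 x y z) - f 4 (xi k l m 4 x y z)
    \<and> P x y z 0 = - c0 * rho0 * rr k l m 1 * f 1 (xi k l m 1 x y z) + c0 * rho0 * rr k l m 2 * f 2 (xi k l m 2 x y z))"
  proof -
  define w :: "nat \<Rightarrow> real" where "w = (\<lambda>i. if i = 1 then k 1 * U0 - c0 * rr k l m 1
     else if i = 2 then k 2 * U0 + c0 * rr k l m 2 else k i * U0)"
  define cx :: "nat \<Rightarrow> real" where "cx = (\<lambda>i. if i = 1 then k 1 else if i = 2 then k 2
     else if i = 3 then l 3 / k 3 else m 4 / k 4)"
  define cy :: "nat \<Rightarrow> real" where "cy = (\<lambda>i. if i = 1 then l 1 else if i = 2 then l 2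
     else if i = 3 then -1 else 0)"
  define cz :: "nat \<Rightarrow> real" where "cz = (\<lambda>i. if i = 1 then m 1 else if i = 2 then m 2
     else if i = 3 then 0 else -1)"
  define cp :: "nat \<Rightarrow> real" where "cp = (\<lambda>i. if i = 1 then - c0 * rho0 * rr k l m 1
     else if i = 2 then c0 * rho0 * rr k l m 2 else 0)"
  have d: "\<And>i u. i \<in> {1,2,3,4} \<Longrightarrow> (f i has_real_derivative deriv (f i) u) (at u)"
  proof -
    fix i u assume "i \<in> {1,2,3,4::nat}"
    then have "f i C1_differentiable_on UNIV" using assms(4) by blast
    then have "f i differentiable at u"
      by (meson C1_differentiable_on_eq UNIV_I real_differentiable_def)
    then show "(f i has_real_derivative deriv (f i) u) (at u)"
      using DERIV_deriv_iff_real_differentiable by blast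
  qed
  have eVx: "Vx = G f k l m w cx" unfolding Vx_def
    by (intro ext) (simp add: G_def vx_def arg1_def arg2_def arg3_def arg4_def xi_def w_def cx_def algebra_simps)
  have eVy: "Vy = G f k l m w cy" unfolding Vy_def
    by (intro ext) (simp add: G_def vy_def arg1_def arg2_def arg3_def arg4_def xi_def w_def cy_def algebra_simps)
  have eVz: "Vz = G f k l m w cz" unfolding Vz_def
    by (intro ext) (simp add: G_def vz_def arg1_def arg2_def arg3_def arg4_def xi_def w_def cz_def algebra_simps)
  have eP: "P = G f k l m w cp" unfolding P_def
    by (intro ext) (simp add: G_def pp_def arg1_def arg2_def arg3_def arg4_def xi_def w_def cp_def algebra_simps)
  have r1: "(rr k l m 1)\<^sup>2 = (k 1)\<^sup>2 + (l 1)\<^sup>2 + (m 1)\<^sup>2" unfolding rr_def by simp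
  have r2: "(rr k l m 2)\<^sup>2 = (k 2)\<^sup>2 + (l 2)\<^sup>2 + (m 2)\<^sup>2" unfolding rr_def by simp
  have r1': "\<And>X. rr k l m (Suc 0) * (rr k l m (Suc 0) * X) = ((k 1)\<^sup>2 + (l 1)\<^sup>2 + (m 1)\<^sup>2) * X"
    using r1 by (simp add: power2_eq_square mult.assoc[symmetric])
  have r2': "\<And>X. rr k l m 2 * (rr k l m 2 * X) = ((k 2)\<^sup>2 + (l 2)\<^sup>2 + (m 2)\<^sup>2) * X"
    using r2 by (simp add: power2_eq_square mult.assoc[symmetric])
  have k3: "k 3 \<noteq> 0" and k4: "k 4 \<noteq> 0" using assms(5) by auto
  show ?thesis
  proof (intro conjI allI)
    fix x y z t
    show "deriv (\<lambda>s. Vx x y z s) t + U0 * deriv (\<lambda>s. Vx s y z t) x + 1 / rho0 * deriv (\<lambda>s. P s y z t) x = 0"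
      unfolding eVx eP
      apply (simp only: G_dt[OF d] G_dx[OF d] G_dy[OF d] G_dz[OF d])
      using k3 k4 assms(3)
      apply (simp add: w_def cx_def cp_def field_simps)
      done
    show "deriv (\<lambda>s. Vy x y z s) t + U0 * deriv (\<lambda>s. Vy s y z t) x + 1 / rho0 * deriv (\<lambda>s. P x s z t) y = 0"
      unfolding eVy eP
      apply (simp only: G_dt[OF d] G_dx[OF d] G_dy[OF d] G_dz[OF d])
      using k3 k4 assms(3)
      apply (simp add: w_def cy_def cp_def field_simps)
      done
    show "deriv (\<lambda>s. Vz x y z s) t + U0 * deriv (\<lambda>s. Vz s y z t) x + 1 / rho0 * deriv (\<lambda>s. P x y s t) z = 0"
      unfolding eVz eP
      apply (simp only: G_dt[OF d] G_dx[OF d] G_dy[OF d] G_dz[OF d])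
      using k3 k4 assms(3)
      apply (simp add: w_def cz_def cp_def field_simps)
      done
    show "deriv (\<lambda>s. P x y z s) t + U0 * deriv (\<lambda>s. P s y z t) x
        + rho0 * c0\<^sup>2 * (deriv (\<lambda>s. Vx s y z t) x + deriv (\<lambda>s. Vy x s z t) y + deriv (\<lambda>s. Vz x y s t) z) = 0"
      unfolding eVx eVy eVz eP
      apply (simp only: G_dt[OF d] G_dx[OF d] G_dy[OF d] G_dz[OF d])
      using k3 k4 assms(3)
      apply (simp add: w_def cx_def cy_def cz_def cp_def field_simps)
      apply (simp add: r1' r2')
      apply (simp add: algebra_simps power2_eq_square)
      done
  next
    fix x y z
    show "Vx x y z 0 = k 1 * f 1 (xi k l m 1 x y z) + k 2 * f 2 (xi k l m 2 x y z)
          + l 3 / k 3 * f 3 (xi k l m 3 x y z) + m 4 / k 4 * f 4 (xi k l m 4 x y z)"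
      unfolding Vx_def by (simp add: vx_def arg1_def arg2_def arg3_def arg4_def)
    show "Vy x y z 0 = l 1 * f 1 (xi k l m 1 x y z) + l 2 * f 2 (xi k l m 2 x y z) - f 3 (xi k l m 3 x y z)"
      unfolding Vy_def by (simp add: vy_def arg1_def arg2_def arg3_def arg4_def)
    show "Vz x y z 0 = m 1 * f 1 (xi k l m 1 x y z) + m 2 * f 2 (xi k l m 2 x y z) - f 4 (xi k l m 4 x y z)"
      unfolding Vz_def by (simp add: vz_def arg1_def arg2_def arg3_def arg4_def)
    show "P x y z 0 = - c0 * rho0 * rr k l m 1 * f 1 (xi k l m 1 x y z) + c0 * rho0 * rr k l m 2 * f 2 (xi k l m 2 x y z)"
      unfolding P_def by (simp add: pp_def arg1_def arg2_def arg3_def arg4_def)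
  qed
qed

end
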